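(* Consider an execution of \texttt{ThresholdMonitor} (described in the context) on a database $S$, with parameters $\varepsilon,\delta,t,k$, interacting with a stream of $m$ adaptively chosen queries $f_1,f_2,\dots,f_m:X\to[0,1]$. Let $S_i$ denote the database $S$ as it is before answering the $i$th query. Then for every $\beta>0$, with probability at least $1-\beta$: (1) for every $i$ such that $a_i=\top$ it holds that $f_i(S_i)\geq t-\tilde{O}\left(\frac{1}{\varepsilon}\log\left(\frac{1}{\delta}\right)\log\left(\frac{m}{\beta}\right)\right)$; (2) for every $i$ such that $a_i=\bot$ it holds that $f_i(S_i)\leq t+\tilde{O}\left(\frac{1}{\varepsilon}\log\left(\frac{1}{\delta}\right)\log\left(\frac{m}{\beta}\right)\right)$.
   Context: $X$ is a data domain; a database $S$ is a finite multiset of elements of $X$. For a query $f:X\to[0,1]$ and database $D$, $f(D)=\sum_{x\in D}f(x)$. $\mathrm{Lap}(b)$ denotes the Laplace distribution with density $\frac{1}{2b}e^{-|x|/b}$. Algorithm \texttt{ThresholdMonitor}. Input: database $S$, privacy parameters $\varepsilon,\delta$, threshold $t$, parameter $k$, and an adaptively chosen stream of queries $f_i:X\to[0,1]$. Initialize a counter $c(x)=0$ for all $x\in X$. Let $\Delta=\frac{1}{\varepsilon}\log\left(\frac{1}{\delta}\right)\log\left(\frac{1}{\varepsilon}\log\frac{1}{\delta}\right)$. In each round $i$, on receiving $f_i$: sample independently $w_i\sim\mathrm{Lap}(10\Delta)$ and $v_i\sim\mathrm{Lap}(\frac{1}{\varepsilon}\log\frac{1}{\delta})$; set $\overline{v}_i=\min\{v_i,\Delta\}$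 and $\hat f_i=f_i(S)+w_i+\overline{v}_i$ (with $S$ the current database). If $\hat f_i<t$ output $a_i=\bot$. Otherwise output $a_i=\top$, set $c(x)\leftarrow c(x)+f_i(x)$ for every $x\in X$, and delete from $S$ every element $x$ with $c(x)\geq k$. Proceed to the next round. *)

theory Defs
  imports "HOL-Probability.Probability"
begin

definition laplace :: "real \<Rightarrow> real measure" where
  "laplace b = density lborel (\<lambda>x. ennreal (exp (- \<bar>x\<bar> / b) / (2 * b)))"

definition qval :: "('a \<Rightarrow> real) \<Rightarrow> 'a multiset \<Rightarrow> real" where
  "qval f D = sum_mset (image_mset f D)"

definition tm_L :: "real \<Rightarrow> real \<Rightarrow> real" where
  "tm_L \<epsilon> \<delta> = (1 / \<epsilon>) * ln (1 / \<delta>)"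

definition tm_Delta :: "real \<Rightarrow> real \<Rightarrow> real" where
  "tm_Delta \<epsilon> \<delta> = tm_L \<epsilon> \<delta> * ln (tm_L \<epsilon> \<delta>)"

definition tm_noise :: "real \<Rightarrow> real \<Rightarrow> nat \<Rightarrow> (nat \<Rightarrow> real \<times> real) measure" where
  "tm_noise \<epsilon> \<delta> m =
     PiM {..<m} (\<lambda>_. laplace (10 * tm_Delta \<epsilon> \<delta>) \<Otimes>\<^sub>M laplace (tm_L \<epsilon> \<delta>))"

text \<open>State of ThresholdMonitor before round i (0-indexed): current database S_i, counter c,
  and the list of answers a_0..a_{i-1} (True = top, False = bot).  The adaptive analyst
  adv chooses the next query as a function of the answers seen so far.\<close>
fun tm_state :: "real \<Rightarrow> real \<Rightarrow> real \<Rightarrow> real \<Rightarrow> (bool list \<Rightarrow> 'a \<Rightarrow> real) \<Rightarrow> 'a multiset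
    \<Rightarrow> (nat \<Rightarrow> real \<times> real) \<Rightarrow> nat \<Rightarrow> 'a multiset \<times> ('a \<Rightarrow> real) \<times> bool list" where
  "tm_state \<epsilon> \<delta> t k adv S0 noise 0 = (S0, (\<lambda>_. 0), [])"
| "tm_state \<epsilon> \<delta> t k adv S0 noise (Suc i) =
     (case tm_state \<epsilon> \<delta> t k adv S0 noise i of (S, c, as) \<Rightarrow>
       (let f = adv as;
            fh = qval f S + fst (noise i) + min (snd (noise i)) (tm_Delta \<epsilon> \<delta>)
        in if fh < t then (S, c, as @ [False])
           else (let c' = (\<lambda>x. c x + f x)
                 in (filter_mset (\<lambda>x. c' x < k) S, c', as @ [True]))))"

definition tm_db where "tm_db \<epsilon> \<delta> t k adv S0 noise i = fst (tm_state \<epsilon> \<delta> t k adv S0 noise i)"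
definition tm_query where
  "tm_query \<epsilon> \<delta> t k adv S0 noise i = adv (snd (snd (tm_state \<epsilon> \<delta> t k adv S0 noise i)))"
definition tm_ans where
  "tm_ans \<epsilon> \<delta> t k adv S0 noise i = last (snd (snd (tm_state \<epsilon> \<delta> t k adv S0 noise (Suc i))))"

end

theory Submission imports Defs begin

lemma lap_density_int:
  fixes b s :: real assumes b: "b > 0" and s: "s \<ge> 0"
  shows "((\<lambda>x. exp (- \<bar>x\<bar> / b) / (2 * b)) has_integral (1 - exp (- s / b))) {-s..s}"
proof -
  have d1: "((\<lambda>x. exp (x / b) / 2) has_vector_derivative exp (x / b) / (2 * b)) (at x within {-s..0})" for x
    using b by (auto intro!: derivative_eq_intros simp: has_real_derivative_iff_has_vector_derivative[symmetric] field_simps)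
  have "((\<lambda>x. exp (x / b) / (2 * b)) has_integral (exp (0 / b) / 2 - exp (- s / b) / 2)) {-s..0}"
    using fundamental_theorem_of_calculus[OF _ d1] s by simp
  then have i1: "((\<lambda>x. exp (x / b) / (2 * b)) has_integral (1/2 - exp (- s / b) / 2)) {-s..0}"
    by simp
  have 1: "((\<lambda>x. exp (- \<bar>x\<bar> / b) / (2 * b)) has_integral (1/2 - exp (- s / b) / 2)) {-s..0}"
    by (rule has_integral_eq[OF _ i1]) auto
  have d2: "((\<lambda>x. - exp (- x / b) / 2) has_vector_derivative exp (- x / b) / (2 * b)) (at x within {0..s})" for x
    using b by (auto intro!: derivative_eq_intros simp: has_real_derivative_iff_has_vector_derivative[symmetric] field_simps)
  have "((\<lambda>x. exp (- x / b) / (2 * b)) has_integral (- exp (- s / b) / 2 - (- exp (- 0 / b) / 2))) {0..s}"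
    using fundamental_theorem_of_calculus[OF _ d2] s by simp
  then have i2: "((\<lambda>x. exp (- x / b) / (2 * b)) has_integral (1/2 - exp (- s / b) / 2)) {0..s}"
    by simp
  have 2: "((\<lambda>x. exp (- \<bar>x\<bar> / b) / (2 * b)) has_integral (1/2 - exp (- s / b) / 2)) {0..s}"
    by (rule has_integral_eq[OF _ i2]) auto
  have "((\<lambda>x. exp (- \<bar>x\<bar> / b) / (2 * b)) has_integral
      ((1/2 - exp (- s / b) / 2) + (1/2 - exp (- s / b) / 2))) {-s..s}"
    using s by (intro has_integral_combine[OF _ _ 1 2]) auto
  then show ?thesis by simp
qed

lemma lap_emeasure:
  fixes b s :: real assumes b: "b > 0" and s: "s \<ge> 0"
  shows "emeasure (laplace b) {-s..s} = ennreal (1 - exp (- s / b))"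
proof -
  have "emeasure (laplace b) {-s..s} = (\<integral>\<^sup>+ x. ennreal (exp (- \<bar>x\<bar> / b) / (2 * b)) * indicator {-s..s} x \<partial>lborel)"
    unfolding laplace_def by (subst emeasure_density) auto
  also have "\<dots> = ennreal (1 - exp (- s / b))"
    using b by (intro nn_integral_has_integral_lebesgue' lap_density_int[OF b s]) auto
  finally show ?thesis .
qed

lemma lap_sets: "sets (laplace b) = sets borel"
  unfolding laplace_def by simp

lemma lap_sf: "sigma_finite_measure (laplace b)"
  unfolding laplace_def
  by (subst sigma_finite_measure.sigma_finite_iff_density_finite) (auto intro: lborel.sigma_finite_measure_axioms)

lemma pair_meas:
  fixes bw bv sw sv :: real
  assumes "bw > 0" "bv > 0" "sw \<ge> 0" "sv \<ge> 0"
  shows "emeasure (laplace bw \<Otimes>\<^sub>M laplace bv) ({-sw..sw} \<times> {-sv..sv})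
     = ennreal ((1 - exp (- sw / bw)) * (1 - exp (- sv / bv)))"
proof -
  interpret sigma_finite_measure "laplace bv" by (rule lap_sf)
  have "emeasure (laplace bw \<Otimes>\<^sub>M laplace bv) ({-sw..sw} \<times> {-sv..sv})
     = emeasure (laplace bw) {-sw..sw} * emeasure (laplace bv) {-sv..sv}"
    by (rule emeasure_pair_measure_Times) (auto simp: lap_sets)
  also have "\<dots> = ennreal ((1 - exp (- sw / bw)) * (1 - exp (- sv / bv)))"
    using assms by (simp add: lap_emeasure ennreal_mult[symmetric])
  finally show ?thesis .
qed

lemma pi_meas:
  fixes bw bv sw sv :: real and m :: nat
  assumes "bw > 0" "bv > 0" "sw \<ge> 0" "sv \<ge> 0"
  defines "M \<equiv> PiM {..<m} (\<lambda>_. laplace bw \<Otimes>\<^sub>M laplace bv)"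
  defines "A \<equiv> PiE {..<m} (\<lambda>_. {-sw..sw} \<times> {-sv..sv})"
  shows "A \<in> sets M" "measure M A = ((1 - exp (- sw / bw)) * (1 - exp (- sv / bv))) ^ m"
proof -
  have sR: "{-sw..sw} \<times> {-sv..sv} \<in> sets (laplace bw \<Otimes>\<^sub>M laplace bv)"
    by (auto simp: lap_sets)
  show "A \<in> sets M" unfolding A_def M_def
    by (rule sets_PiM_I_finite) (use sR in auto)
  interpret product_sigma_finite "\<lambda>_. laplace bw \<Otimes>\<^sub>M laplace bv"
    unfolding product_sigma_finite_def
    by (auto intro!: sigma_finite_pair_measure lap_sf)
  have "emeasure M A = (\<Prod>i\<in>{..<m}. emeasure (laplace bw \<Otimes>\<^sub>M laplace bv) ({-sw..sw} \<times> {-sv..sv}))"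
    unfolding A_def M_def by (rule emeasure_PiM) (use sR in auto)
  also have "\<dots> = ennreal (((1 - exp (- sw / bw)) * (1 - exp (- sv / bv))) ^ m)"
    using assms by (simp add: pair_meas ennreal_power)
  finally show "measure M A = ((1 - exp (- sw / bw)) * (1 - exp (- sv / bv))) ^ m"
    unfolding measure_def using assms by simp
qed

lemma sem:
  fixes sw sv :: real
  assumes "\<bar>fst (\<omega> i)\<bar> \<le> sw" "\<bar>snd (\<omega> i)\<bar> \<le> sv" "tm_Delta \<epsilon> \<delta> \<ge> 0" "sv \<ge> 0"
  shows "(tm_ans \<epsilon> \<delta> t k adv S \<omega> i \<longrightarrow>
                  qval (tm_query \<epsilon> \<delta> t k adv S \<omega> i) (tm_db \<epsilon> \<delta> t k adv S \<omega> i) \<ge> t - (sw + sv)) \<and>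
         (\<not> tm_ans \<epsilon> \<delta> t k adv S \<omega> i \<longrightarrow>
                  qval (tm_query \<epsilon> \<delta> t k adv S \<omega> i) (tm_db \<epsilon> \<delta> t k adv S \<omega> i) \<le> t + (sw + sv))"
proof -
  obtain D c as where st: "tm_state \<epsilon> \<delta> t k adv S \<omega> i = (D, c, as)"
    by (metis prod.exhaust)
  define fh where "fh = qval (adv as) D + fst (\<omega> i) + min (snd (\<omega> i)) (tm_Delta \<epsilon> \<delta>)"
  have q: "tm_query \<epsilon> \<delta> t k adv S \<omega> i = adv as" "tm_db \<epsilon> \<delta> t k adv S \<omega> i = D"
    by (simp_all add: tm_query_def tm_db_def st)
  have a: "tm_ans \<epsilon> \<delta> t k adv S \<omega> i = (\<not> fh < t)"
    by (simp add: tm_ans_def st fh_def Let_def)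
  show ?thesis unfolding q a fh_def using assms by (auto simp: min_def abs_le_iff)
qed

theorem theorem3p1:
  "\<exists>C (K::nat). C > 0 \<and>
    (\<forall>(\<epsilon>::real) (\<delta>::real) (t::real) (k::real) (m::nat) (\<beta>::real)
        (adv :: bool list \<Rightarrow> 'a \<Rightarrow> real) (S :: 'a multiset).
      0 < \<epsilon> \<longrightarrow> 0 < \<delta> \<longrightarrow> \<delta> < 1 \<longrightarrow> 0 < tm_Delta \<epsilon> \<delta> \<longrightarrow>
      (\<forall>as x. 0 \<le> adv as x \<and> adv as x \<le> 1) \<longrightarrow> 0 < \<beta> \<longrightarrow>
      (let B = C * tm_L \<epsilon> \<delta> * (1 + ln (tm_L \<epsilon> \<delta>)) ^ K * (1 + ln (real m / \<beta>))
       in \<exists>A \<in> sets (tm_noise \<epsilon> \<delta> m).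
            measure (tm_noise \<epsilon> \<delta> m) A \<ge> 1 - \<beta> \<and>
            (\<forall>\<omega> \<in> A. \<forall>i < m.
               (tm_ans \<epsilon> \<delta> t k adv S \<omega> i \<longrightarrow>
                  qval (tm_query \<epsilon> \<delta> t k adv S \<omega> i) (tm_db \<epsilon> \<delta> t k adv S \<omega> i) \<ge> t - B) \<and>
               (\<not> tm_ans \<epsilon> \<delta> t k adv S \<omega> i \<longrightarrow>
                  qval (tm_query \<epsilon> \<delta> t k adv S \<omega> i) (tm_db \<epsilon> \<delta> t k adv S \<omega> i) \<le> t + B))))"
proof (intro exI[of _ "10::real"] exI[of _ "1::nat"] conjI allI impI)
  fix \<epsilon> \<delta> t k :: real and m :: nat and \<beta> :: real and adv :: "bool list \<Rightarrow> 'a \<Rightarrow> real" and S :: "'a multiset"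
  assume e: "0 < \<epsilon>" and d0: "0 < \<delta>" and d1: "\<delta> < 1" and D: "0 < tm_Delta \<epsilon> \<delta>"
    and adv: "\<forall>as x. 0 \<le> adv as x \<and> adv as x \<le> 1" and b: "0 < \<beta>"
  define L where "L = tm_L \<epsilon> \<delta>"
  define Dl where "Dl = tm_Delta \<epsilon> \<delta>"
  define B where "B = 10 * L * (1 + ln L) ^ 1 * (1 + ln (real m / \<beta>))"
  have L0: "L > 0" unfolding L_def tm_L_def using e d0 d1 by (simp add: field_simps)
  have Dl: "Dl = L * ln L" unfolding Dl_def L_def tm_Delta_def by simp
  have Dl0: "Dl > 0" using D Dl_def by simp
  have lnL: "ln L > 0" using Dl0 L0 Dl by (simp add: zero_less_mult_iff)
  let ?N = "tm_noise \<epsilon> \<delta> m"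
  have N: "?N = PiM {..<m} (\<lambda>_. laplace (10 * Dl) \<Otimes>\<^sub>M laplace L)"
    unfolding tm_noise_def Dl_def L_def by simp
  let ?P = "\<lambda>A. A \<in> sets ?N \<and> measure ?N A \<ge> 1 - \<beta> \<and>
            (\<forall>\<omega> \<in> A. \<forall>i < m.
               (tm_ans \<epsilon> \<delta> t k adv S \<omega> i \<longrightarrow>
                  qval (tm_query \<epsilon> \<delta> t k adv S \<omega> i) (tm_db \<epsilon> \<delta> t k adv S \<omega> i) \<ge> t - B) \<and>
               (\<not> tm_ans \<epsilon> \<delta> t k adv S \<omega> i \<longrightarrow>
                  qval (tm_query \<epsilon> \<delta> t k adv S \<omega> i) (tm_db \<epsilon> \<delta> t k adv S \<omega> i) \<le> t + B))"
  have "\<exists>A. ?P A"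
  proof (cases "\<beta> \<ge> 1 \<or> m = 0")
    case True
    show ?thesis
    proof (cases "\<beta> \<ge> 1")
      case True
      then show ?thesis by (intro exI[of _ "{}"]) auto
    next
      case False
      then have m: "m = 0" using \<open>\<beta> \<ge> 1 \<or> m = 0\<close> by simp
      have 10: "10 * Dl > 0" using Dl0 by simp
      show ?thesis
        using pi_meas[OF 10 L0, of 0 0 m] b m unfolding N[symmetric]
        by (intro exI[of _ "PiE {..<m} (\<lambda>_. {-0..0} \<times> {-0..0})"]) auto
    qed
  next
    case False
    then have b1: "\<beta> < 1" and m1: "m \<ge> 1" by auto
    define q where "q = ln (2 * real m / \<beta>)"
    have mb: "real m / \<beta> > 1" using b1 m1 b by (simp add: field_simps)
    have q_eq: "q = ln 2 + ln (real m / \<beta>)"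
    proof -
      have "ln (2 * (real m / \<beta>)) = ln 2 + ln (real m / \<beta>)" using mb by (intro ln_mult_pos) auto
      then show ?thesis by (simp add: q_def)
    qed
    have lnmb: "ln (real m / \<beta>) > 0" using mb by simp
    have l2: "ln (2::real) > 0" by simp
    have q0: "q > 0" using q_eq lnmb l2 by linarith
    have q1: "q \<le> 1 + ln (real m / \<beta>)" using q_eq ln_2_less_1 by simp
    define sw where "sw = 10 * Dl * q"
    define sv where "sv = L * q"
    have sw0: "sw \<ge> 0" "sv \<ge> 0" using q0 Dl0 L0 by (auto simp: sw_def sv_def)
    have 10: "10 * Dl > 0" using Dl0 by simp
    have ex: "exp (- q) = \<beta> / (2 * real m)"
      unfolding q_def using b m1 by (simp add: exp_minus field_simps)
    have e1: "exp (- sw / (10 * Dl)) = \<beta> / (2 * real m)" using ex 10 by (simp add: sw_def)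
    have e2: "exp (- sv / L) = \<beta> / (2 * real m)" using ex L0 by (simp add: sv_def)
    define x where "x = \<beta> / (2 * real m)"
    have x0: "x \<ge> 0" "2 * x \<le> 1" using b b1 m1 by (auto simp: x_def field_simps)
    have "1 - \<beta> = 1 + real m * (- (2 * x))" using m1 by (simp add: x_def field_simps)
    also have "\<dots> \<le> (1 + (- (2 * x))) ^ m" by (rule Bernoulli_inequality) (use x0 in simp)
    also have "\<dots> \<le> ((1 - x) * (1 - x)) ^ m"
      by (rule power_mono) (use x0 in \<open>auto simp: algebra_simps\<close>)
    finally have mes: "1 - \<beta> \<le> ((1 - exp (- sw / (10 * Dl))) * (1 - exp (- sv / L))) ^ m"
      using e1 e2 x_def by simp
    have sB: "sw + sv \<le> B"
    proof -
      have "sw + sv = (10 * L * ln L + L) * q" by (simp add: sw_def sv_def Dl algebra_simps)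
      also have "\<dots> \<le> (10 * L * (1 + ln L)) * (1 + ln (real m / \<beta>))"
        by (rule mult_mono) (use L0 lnL q0 q1 in \<open>auto simp: algebra_simps\<close>)
      finally show ?thesis by (simp add: B_def)
    qed
    show ?thesis
    proof (intro exI[of _ "PiE {..<m} (\<lambda>_. {-sw..sw} \<times> {-sv..sv})"] conjI ballI allI impI)
      show "PiE {..<m} (\<lambda>_. {-sw..sw} \<times> {-sv..sv}) \<in> sets ?N"
        using pi_meas(1)[OF 10 L0 sw0, of m] N by simp
      show "1 - \<beta> \<le> measure ?N (PiE {..<m} (\<lambda>_. {-sw..sw} \<times> {-sv..sv}))"
        using pi_meas(2)[OF 10 L0 sw0, of m] N mes by simp
    next
      fix \<omega> i assume w: "\<omega> \<in> PiE {..<m} (\<lambda>_. {-sw..sw} \<times> {-sv..sv})" and i: "i < m"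
      then have wi: "\<omega> i \<in> {-sw..sw} \<times> {-sv..sv}" by auto
      have ab: "\<bar>fst (\<omega> i)\<bar> \<le> sw" "\<bar>snd (\<omega> i)\<bar> \<le> sv"
        using wi by (auto simp: abs_le_iff mem_Times_iff)
      have D0: "tm_Delta \<epsilon> \<delta> \<ge> 0" using D by simp
      note s = sem[where \<omega>=\<omega> and i=i and sw=sw and sv=sv and \<epsilon>=\<epsilon> and \<delta>=\<delta> and t=t and k=k and adv=adv and S=S, OF ab D0 sw0(2)]
      {
        assume "tm_ans \<epsilon> \<delta> t k adv S \<omega> i"
        then show "qval (tm_query \<epsilon> \<delta> t k adv S \<omega> i) (tm_db \<epsilon> \<delta> t k adv S \<omega> i) \<ge> t - B"
          using s D0 sw0 sB by auto
      }
      {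
        assume "\<not> tm_ans \<epsilon> \<delta> t k adv S \<omega> i"
        then show "qval (tm_query \<epsilon> \<delta> t k adv S \<omega> i) (tm_db \<epsilon> \<delta> t k adv S \<omega> i) \<le> t + B"
          using s D0 sw0 sB by auto
      }
    qed
  qed
  then show "let B = 10 * tm_L \<epsilon> \<delta> * (1 + ln (tm_L \<epsilon> \<delta>)) ^ 1 * (1 + ln (real m / \<beta>))
       in \<exists>A \<in> sets (tm_noise \<epsilon> \<delta> m).
            measure (tm_noise \<epsilon> \<delta> m) A \<ge> 1 - \<beta> \<and>
            (\<forall>\<omega> \<in> A. \<forall>i < m.
               (tm_ans \<epsilon> \<delta> t k adv S \<omega> i \<longrightarrow>
                  qval (tm_query \<epsilon> \<delta> t k adv S \<omega> i) (tm_db \<epsilon> \<delta> t k adv S \<omega> i) \<ge> t - B) \<and>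
               (\<not> tm_ans \<epsilon> \<delta> t k adv S \<omega> i \<longrightarrow>
                  qval (tm_query \<epsilon> \<delta> t k adv S \<omega> i) (tm_db \<epsilon> \<delta> t k adv S \<omega> i) \<le> t + B))"
    unfolding Let_def B_def L_def by blast
qed (simp)

end
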